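(* For every labelled sequent $\mathfrak{S}$: if $\mathrm{labCS}^\infty \vdash \mathfrak{S}$, then $\mathcal{M}\Vdash\mathfrak{S}$ for every Carlson model $\mathcal{M}$.
   Context: Formulas: fix a countable set $\mathtt{Prop}$ of propositional atoms; formulas are generated by $A ::= \bot \mid p \mid A \to A \mid \Box A \mid \triangle A$ with $p \in \mathtt{Prop}$. Carlson models: a Carlson model is a tuple $\mathcal{M} = \langle W, \prec, M_0, M_1, V\rangle$ where $W$ is a non-empty set, $\prec \subseteq W\times W$ is transitive and conversely wellfounded (there is no infinite chain $w_0 \prec w_1 \prec \cdots$), $M_0, M_1 \subseteq W$, and $V : \mathtt{Prop} \to \mathcal{P}(W)$. Truth: $\mathcal{M},x \nVdash \bot$; $\mathcal{M},x\Vdash p$ iff $x \in V(p)$; $\mathcal{M},x \Vdash A\to B$ iff $\mathcal{M},x\nVdash A$ or $\mathcal{M},x\Vdash B$; $\mathcal{M},x\Vdash \Box A$ iff $\mathcal{M},y \Vdash A$ for all $y$ with $x \prec y$ and $y \in M_0$; $\mathcal{M},x\Vdash \triangle A$ iff $\mathcal{M},y \Vdash A$ for all $y$ with $x \prec y$ and $y \in M_1$. Labelled sequents: fix a countable set $\mathtt{Lab}$ of labels. A labelled formula is $x:A$ with $x\in\mathtt{Lab}$ and $A$ a formula; a relational atom is $xRy$ or $xSy$ with $x,y \in \mathtt{Lab}$. A sequent $\mathcal{R},\Gamma\Rightarrow\Omega$ consists of a finite multiset $\mathcal{R}$ of relational atoms and finite multisets $\Gamma,\Omega$ of labelled formulas;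 commas denote multiset union. $Lab(\mathfrak{S})$ is the set of labels occurring in $\mathfrak{S}$. Rules of $\mathrm{labCS}^\infty$ (premisses above, conclusion below; $\mathcal{R},\Gamma,\Omega$ arbitrary): (Id) no premiss, conclusion $\mathcal{R},\Gamma,x:p\Rightarrow x:p,\Omega$ with $p\in\mathtt{Prop}$; ($\bot$) no premiss, conclusion $\mathcal{R},\Gamma,x:\bot\Rightarrow\Omega$; ($\to$R) from $\mathcal{R},\Gamma,x:A\Rightarrow x:B,\Omega$ infer $\mathcal{R},\Gamma\Rightarrow x:A\to B,\Omega$; ($\to$L) from $\mathcal{R},\Gamma\Rightarrow x:A,\Omega$ and $\mathcal{R},\Gamma,x:B\Rightarrow\Omega$ infer $\mathcal{R},\Gamma,x:A\to B\Rightarrow\Omega$; ($\Box$R) from $\mathcal{R},xRy,\Gamma\Rightarrow y:A,\Omega$ infer $\mathcal{R},\Gamma\Rightarrow x:\Box A,\Omega$, provided $y$ does not occur in the conclusion; ($\Box$L) from $\mathcal{R},xRy,x:\Box A,y:A,\Gamma\Rightarrow\Omega$ infer $\mathcal{R},xRy,x:\Box A,\Gamma\Rightarrow\Omega$; ($\triangle$R) from $\mathcal{R},xSy,\Gamma\Rightarrow y:A,\Omega$ infer $\mathcal{R},\Gamma\Rightarrow x:\triangle A,\Omega$, provided $y$ does not occur in the conclusion; ($\triangle$L) from $\mathcal{R},xSy,x:\triangle A,y:A,\Gamma\Rightarrow\Omega$ infer $\mathcal{R},xSy,x:\triangle A,\Gamma\Rightarrow\Omega$; ($\mathrm{trans}_{\circ\bullet}$,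 for each $\circ,\bullet\in\{R,S\}$) from $\mathcal{R},x\circ y,y\bullet z,x\bullet z,\Gamma\Rightarrow\Omega$ infer $\mathcal{R},x\circ y,y\bullet z,\Gamma\Rightarrow\Omega$. Proofs: a pre-proof is a possibly infinite tree of sequents in which each node is the conclusion of an instance of a rule whose premisses are exactly its children. A trace along an infinite branch $(\mathfrak{S}_i)_{i<\omega}$ with $\mathfrak{S}_i=\mathcal{R}_i,\Gamma_i\Rightarrow\Omega_i$ is a sequence of labels $(x_i)_{i<\omega}$ such that for each $i$: $x_{i+1}=x_i$, or $x_iRx_{i+1}\in\mathcal{R}_i$, or $x_iSx_{i+1}\in\mathcal{R}_i$. A trace is progressing if it is not eventually constant; a branch is progressing if it has a progressing trace. A proof is a pre-proof in which every branch is either finite or progressing. $\mathrm{labCS}^\infty\vdash\mathfrak{S}$ means there is a proof with root $\mathfrak{S}$. Semantics of sequents: given a sequent $\mathfrak{S}=\mathcal{R},\Gamma\Rightarrow\Omega$ and a Carlson model $\mathcal{M}$, an interpretation is a map $I: Lab(\mathfrak{S})\to W$ such that $xRy\in\mathcal{R}$ implies $I(x)\prec I(y)$ and $I(y)\in M_0$, and $xSy\in\mathcal{R}$ implies $I(x)\prec I(y)$ and $I(y)\in M_1$. $\mathcal{M}\Vdash\mathfrak{S}$ means: for every interpretation $I$ of $\mathfrak{S}$ on $\mathcal{M}$, if $\mathcal{M},I(x)\Vdash A$ for all $x:A\in\Gamma$, then $\mathcal{M},I(y)\Vdash B$ for some $y:B\in\Omega$. *)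

theory Defs
  imports Main "HOL-Library.Multiset" "HOL-Library.Countable"
begin

datatype 'p fm = Bot | Atom 'p | Imp "'p fm" "'p fm" | Box "'p fm" | Tri "'p fm"

text \<open>A Carlson model is given by a carrier type 'w (non-empty, as every HOL type),
  a relation prec, sets M0, M1 and a valuation V.\<close>

definition carlson_model :: "('w \<Rightarrow> 'w \<Rightarrow> bool) \<Rightarrow> bool" where
  "carlson_model prec \<longleftrightarrow>
     (\<forall>x y z. prec x y \<longrightarrow> prec y z \<longrightarrow> prec x z) \<and>
     \<not> (\<exists>f :: nat \<Rightarrow> 'w. \<forall>i. prec (f i) (f (Suc i)))"

primrec sat :: "('w \<Rightarrow> 'w \<Rightarrow> bool) \<Rightarrow> 'w set \<Rightarrow> 'w set \<Rightarrow> ('p \<Rightarrow> 'w set)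
                  \<Rightarrow> 'w \<Rightarrow> 'p fm \<Rightarrow> bool" where
  "sat prec M0 M1 V x Bot = False"
| "sat prec M0 M1 V x (Atom p) = (x \<in> V p)"
| "sat prec M0 M1 V x (Imp A B) = (\<not> sat prec M0 M1 V x A \<or> sat prec M0 M1 V x B)"
| "sat prec M0 M1 V x (Box A) = (\<forall>y. prec x y \<and> y \<in> M0 \<longrightarrow> sat prec M0 M1 V y A)"
| "sat prec M0 M1 V x (Tri A) = (\<forall>y. prec x y \<and> y \<in> M1 \<longrightarrow> sat prec M0 M1 V y A)"

datatype rk = RR | SS

datatype 'l ratom = RAt rk 'l 'l   \<comment> \<open>RAt RR x y is xRy, RAt SS x y is xSy\<close>

datatype ('l, 'p) seq = Seq "'l ratom multiset" "('l \<times> 'p fm) multiset" "('l \<times> 'p fm) multiset"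

fun rels :: "('l, 'p) seq \<Rightarrow> 'l ratom multiset" where
  "rels (Seq R G Om) = R"

fun ratom_labels :: "'l ratom \<Rightarrow> 'l set" where
  "ratom_labels (RAt k x y) = {x, y}"

fun seq_labels :: "('l, 'p) seq \<Rightarrow> 'l set" where
  "seq_labels (Seq R G Om) =
     (\<Union>a\<in>set_mset R. ratom_labels a) \<union> fst ` set_mset G \<union> fst ` set_mset Om"

inductive rule :: "('l, 'p) seq list \<Rightarrow> ('l, 'p) seq \<Rightarrow> bool" where
  Id: "rule [] (Seq R (add_mset (x, Atom p) G) (add_mset (x, Atom p) Om))"
| BotL: "rule [] (Seq R (add_mset (x, Bot) G) Om)"
| ImpR: "rule [Seq R (add_mset (x, A) G) (add_mset (x, B) Om)]
              (Seq R G (add_mset (x, Imp A B) Om))"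
| ImpL: "rule [Seq R G (add_mset (x, A) Om), Seq R (add_mset (x, B) G) Om]
              (Seq R (add_mset (x, Imp A B) G) Om)"
| BoxR: "y \<notin> seq_labels (Seq R G (add_mset (x, Box A) Om)) \<Longrightarrow>
         rule [Seq (add_mset (RAt RR x y) R) G (add_mset (y, A) Om)]
              (Seq R G (add_mset (x, Box A) Om))"
| BoxL: "rule [Seq (add_mset (RAt RR x y) R) (add_mset (x, Box A) (add_mset (y, A) G)) Om]
              (Seq (add_mset (RAt RR x y) R) (add_mset (x, Box A) G) Om)"
| TriR: "y \<notin> seq_labels (Seq R G (add_mset (x, Tri A) Om)) \<Longrightarrow>
         rule [Seq (add_mset (RAt SS x y) R) G (add_mset (y, A) Om)]
              (Seq R G (add_mset (x, Tri A) Om))"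
| TriL: "rule [Seq (add_mset (RAt SS x y) R) (add_mset (x, Tri A) (add_mset (y, A) G)) Om]
              (Seq (add_mset (RAt SS x y) R) (add_mset (x, Tri A) G) Om)"
| Trans: "rule [Seq (add_mset (RAt c x y) (add_mset (RAt b y z) (add_mset (RAt b x z) R))) G Om]
               (Seq (add_mset (RAt c x y) (add_mset (RAt b y z) R)) G Om)"

text \<open>A (possibly infinite) tree is a prefix-closed set P of positions (lists of child
  indices) containing the root [], with a sequent lab n at each node n.\<close>

definition pre_proof :: "nat list set \<Rightarrow> (nat list \<Rightarrow> ('l, 'p) seq) \<Rightarrow> bool" where
  "pre_proof P lab \<longleftrightarrow>
     [] \<in> P \<and>
     (\<forall>n i. n @ [i] \<in> P \<longrightarrow> n \<in> P) \<and>
     (\<forall>n\<in>P. \<exists>k. (\<forall>i. n @ [i] \<in> P \<longleftrightarrow> i < k) \<and>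
                 rule (map (\<lambda>i. lab (n @ [i])) [0..<k]) (lab n))"

definition inf_branch :: "nat list set \<Rightarrow> (nat \<Rightarrow> nat list) \<Rightarrow> bool" where
  "inf_branch P b \<longleftrightarrow> b 0 = [] \<and> (\<forall>i. b i \<in> P \<and> (\<exists>c. b (Suc i) = b i @ [c]))"

definition is_trace :: "(nat \<Rightarrow> ('l, 'p) seq) \<Rightarrow> (nat \<Rightarrow> 'l) \<Rightarrow> bool" where
  "is_trace S x \<longleftrightarrow>
     (\<forall>i. x (Suc i) = x i \<or> RAt RR (x i) (x (Suc i)) \<in># rels (S i)
                          \<or> RAt SS (x i) (x (Suc i)) \<in># rels (S i))"

definition progressing_trace :: "(nat \<Rightarrow> ('l, 'p) seq) \<Rightarrow> (nat \<Rightarrow> 'l) \<Rightarrow> bool" where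
  "progressing_trace S x \<longleftrightarrow> is_trace S x \<and> \<not> (\<exists>n. \<forall>m\<ge>n. x m = x n)"

definition is_proof :: "nat list set \<Rightarrow> (nat list \<Rightarrow> ('l, 'p) seq) \<Rightarrow> bool" where
  "is_proof P lab \<longleftrightarrow> pre_proof P lab \<and>
     (\<forall>b. inf_branch P b \<longrightarrow> (\<exists>x. progressing_trace (\<lambda>i. lab (b i)) x))"

definition provable :: "('l, 'p) seq \<Rightarrow> bool" where
  "provable S \<longleftrightarrow> (\<exists>P lab. is_proof P lab \<and> lab [] = S)"

definition is_interp :: "('w \<Rightarrow> 'w \<Rightarrow> bool) \<Rightarrow> 'w set \<Rightarrow> 'w set \<Rightarrow> ('l, 'p) seq
                               \<Rightarrow> ('l \<Rightarrow> 'w) \<Rightarrow> bool" where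
  "is_interp prec M0 M1 S I \<longleftrightarrow>
     (\<forall>x y. RAt RR x y \<in># rels S \<longrightarrow> prec (I x) (I y) \<and> I y \<in> M0) \<and>
     (\<forall>x y. RAt SS x y \<in># rels S \<longrightarrow> prec (I x) (I y) \<and> I y \<in> M1)"

fun valid_in :: "('w \<Rightarrow> 'w \<Rightarrow> bool) \<Rightarrow> 'w set \<Rightarrow> 'w set \<Rightarrow> ('p \<Rightarrow> 'w set)
                   \<Rightarrow> ('l, 'p) seq \<Rightarrow> bool" where
  "valid_in prec M0 M1 V (Seq R G Om) \<longleftrightarrow>
     (\<forall>I. is_interp prec M0 M1 (Seq R G Om) I \<longrightarrow>
          (\<forall>(x, A)\<in>set_mset G. sat prec M0 M1 V (I x) A) \<longrightarrow>
          (\<exists>(y, B)\<in>set_mset Om. sat prec M0 M1 V (I y) B))"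

end

theory Submission
  imports Defs
begin

fun fals :: "('w \<Rightarrow> 'w \<Rightarrow> bool) \<Rightarrow> 'w set \<Rightarrow> 'w set \<Rightarrow> ('p \<Rightarrow> 'w set)
                   \<Rightarrow> ('l, 'p) seq \<Rightarrow> ('l \<Rightarrow> 'w) \<Rightarrow> bool" where
  "fals prec M0 M1 V (Seq R G Om) I \<longleftrightarrow>
     is_interp prec M0 M1 (Seq R G Om) I \<and>
     (\<forall>(x, A)\<in>set_mset G. sat prec M0 M1 V (I x) A) \<and>
     (\<forall>(y, B)\<in>set_mset Om. \<not> sat prec M0 M1 V (I y) B)"

lemma valid_fals: "valid_in prec M0 M1 V S \<longleftrightarrow> (\<forall>I. \<not> fals prec M0 M1 V S I)"
  by (cases S) (simp, blast)

lemma fals_agree: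
  assumes "\<forall>z\<in>seq_labels S. I' z = I z" "fals prec M0 M1 V S I"
  shows "fals prec M0 M1 V S I'"
proof (cases S)
  case (Seq R G Om)
  have r: "\<forall>x y k. RAt k x y \<in># R \<longrightarrow> I' x = I x \<and> I' y = I y"
    using assms(1) Seq by force
  have g: "\<forall>x A. (x, A) \<in># G \<longrightarrow> I' x = I x"
    using assms(1) Seq by force
  have o: "\<forall>x A. (x, A) \<in># Om \<longrightarrow> I' x = I x"
    using assms(1) Seq by force
  have i: "is_interp prec M0 M1 S I" using assms(2) Seq by simp
  have "is_interp prec M0 M1 S I'" unfolding is_interp_def
  proof (rule conjI; intro allI impI)
    fix a c assume h: "RAt RR a c \<in># rels S"
    then have "prec (I a) (I c) \<and> I c \<in> M0" using i unfolding is_interp_def by blast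
    moreover have "I' a = I a" "I' c = I c" using h r Seq by auto
    ultimately show "prec (I' a) (I' c) \<and> I' c \<in> M0" by simp
  next
    fix a c assume h: "RAt SS a c \<in># rels S"
    then have "prec (I a) (I c) \<and> I c \<in> M1" using i unfolding is_interp_def by blast
    moreover have "I' a = I a" "I' c = I c" using h r Seq by auto
    ultimately show "prec (I' a) (I' c) \<and> I' c \<in> M1" by simp
  qed
  moreover have "\<forall>(x, A)\<in>set_mset G. sat prec M0 M1 V (I' x) A"
  proof (intro ballI, clarify)
    fix a b assume ab: "(a, b) \<in># G"
    then have "I' a = I a" using g by blast
    moreover have "sat prec M0 M1 V (I a) b" using assms(2) Seq ab by auto
    ultimately show "sat prec M0 M1 V (I' a) b" by simp
  qed
  moreover have "\<forall>(y, B)\<in>set_mset Om. \<not> sat prec M0 M1 V (I' y) B"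
  proof (intro ballI, clarify)
    fix a b assume ab: "(a, b) \<in># Om" "sat prec M0 M1 V (I' a) b"
    then have "I' a = I a" using o by blast
    moreover have "\<not> sat prec M0 M1 V (I a) b" using assms(2) Seq ab by auto
    ultimately show False using ab by simp
  qed
  ultimately show ?thesis using Seq by simp
qed

lemma rule_labels: "rule ps c \<Longrightarrow> p \<in> set ps \<Longrightarrow> seq_labels c \<subseteq> seq_labels p"
  by (induction rule: rule.induct) (auto simp: image_iff; force)+

lemma is_interp_add[simp]:
  "is_interp prec M0 M1 (Seq (add_mset (RAt k x y) R) G Om) I \<longleftrightarrow>
   is_interp prec M0 M1 (Seq R G Om) I \<and> prec (I x) (I y) \<and> I y \<in> (if k = RR then M0 else M1)"
  unfolding is_interp_def by (cases k) auto

lemma is_interp_indep[simp]: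
  "is_interp prec M0 M1 (Seq R (add_mset a G) Om) I = is_interp prec M0 M1 (Seq R G Om) I"
  "is_interp prec M0 M1 (Seq R G (add_mset a Om)) I = is_interp prec M0 M1 (Seq R G Om) I"
  unfolding is_interp_def by auto

lemma ex_same: "p \<in> set ps \<Longrightarrow> fals prec M0 M1 V p I \<Longrightarrow>
  \<exists>p\<in>set ps. \<exists>I'. fals prec M0 M1 V p I' \<and> (\<forall>z\<in>L. I' z = I z)"
  by blast

lemma ex_same2: "p \<in> set ps \<Longrightarrow> fals prec M0 M1 V p I' \<Longrightarrow> (\<forall>z\<in>L. I' z = I z) \<Longrightarrow>
  \<exists>p\<in>set ps. \<exists>I'. fals prec M0 M1 V p I' \<and> (\<forall>z\<in>L. I' z = I z)"
  by blast

lemma rule_sound: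
  assumes "rule ps c" "\<forall>x y z. prec x y \<longrightarrow> prec y z \<longrightarrow> prec x z"
    "fals prec M0 M1 V c I"
  shows "\<exists>p\<in>set ps. \<exists>I'. fals prec M0 M1 V p I' \<and> (\<forall>z\<in>seq_labels c. I' z = I z)"
  using assms
proof (induction rule: rule.induct)
  case (Id R x p G Om)
  then show ?case by auto
next
  case (BotL R x G Om)
  then show ?case by auto
next
  case (ImpR R x A G B Om)
  then have "fals prec M0 M1 V (Seq R (add_mset (x, A) G) (add_mset (x, B) Om)) I"
    by auto
  then show ?case by (rule ex_same[rotated]) auto
next
  case (ImpL R G x A Om B)
  then have "fals prec M0 M1 V (Seq R G (add_mset (x, A) Om)) I \<or> fals prec M0 M1 V (Seq R (add_mset (x, B) G) Om) I"
    by auto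
  then show ?case using ex_same[of _ "[Seq R G (add_mset (x, A) Om), Seq R (add_mset (x, B) G) Om]"] by auto
next
  case (BoxR y R G x A Om)
  then obtain w where w: "prec (I x) w" "w \<in> M0" "\<not> sat prec M0 M1 V w A" by auto
  let ?I = "I(y := w)"
  have ag: "\<forall>z\<in>seq_labels (Seq R G (add_mset (x, Box A) Om)). ?I z = I z"
    using BoxR(1) by auto
  have f0: "fals prec M0 M1 V (Seq R G (add_mset (x, Box A) Om)) ?I"
    using fals_agree[OF ag BoxR(3)] .
  have xy: "x \<noteq> y" using BoxR(1) by auto
  have "fals prec M0 M1 V (Seq (add_mset (RAt RR x y) R) G (add_mset (y, A) Om)) ?I"
    using f0 w xy by auto
  then show ?case by (rule ex_same2[rotated, OF _ ag]) simp
next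
  case (BoxL x y R A G Om)
  then have "fals prec M0 M1 V (Seq (add_mset (RAt RR x y) R) (add_mset (x, Box A) (add_mset (y, A) G)) Om) I"
    by auto
  then show ?case by (rule ex_same[rotated]) auto
next
  case (TriR y R G x A Om)
  then obtain w where w: "prec (I x) w" "w \<in> M1" "\<not> sat prec M0 M1 V w A" by auto
  let ?I = "I(y := w)"
  have ag: "\<forall>z\<in>seq_labels (Seq R G (add_mset (x, Tri A) Om)). ?I z = I z"
    using TriR(1) by auto
  have f0: "fals prec M0 M1 V (Seq R G (add_mset (x, Tri A) Om)) ?I"
    using fals_agree[OF ag TriR(3)] .
  have xy: "x \<noteq> y" using TriR(1) by auto
  have "fals prec M0 M1 V (Seq (add_mset (RAt SS x y) R) G (add_mset (y, A) Om)) ?I"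
    using f0 w xy by auto
  then show ?case by (rule ex_same2[rotated, OF _ ag]) simp
next
  case (TriL x y R A G Om)
  then have "fals prec M0 M1 V (Seq (add_mset (RAt SS x y) R) (add_mset (x, Tri A) (add_mset (y, A) G)) Om) I"
    by auto
  then show ?case by (rule ex_same[rotated]) auto
next
  case (Trans c x y b z R G Om)
  from Trans.prems(2) have h: "prec (I x) (I y)" "prec (I y) (I z)" "I z \<in> (if b = RR then M0 else M1)"
    by auto
  with Trans.prems(1) have "prec (I x) (I z)" by blast
  with h Trans.prems(2) have "fals prec M0 M1 V (Seq (add_mset (RAt c x y) (add_mset (RAt b y z) (add_mset (RAt b x z) R))) G Om) I"
    by auto
  then show ?case by (rule ex_same[rotated]) auto
qed

lemma fals_interp: "fals prec M0 M1 V S I \<Longrightarrow> is_interp prec M0 M1 S I"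
  by (cases S) simp

lemma rels_labels: "RAt k a c \<in># rels S \<Longrightarrow> a \<in> seq_labels S \<and> c \<in> seq_labels S"
  by (cases S) force

lemma step_exists:
  assumes "pre_proof P lab" "n \<in> P" "\<forall>x y z. prec x y \<longrightarrow> prec y z \<longrightarrow> prec x z"
    "fals prec M0 M1 V (lab n) I"
  shows "\<exists>i I'. n @ [i] \<in> P \<and> fals prec M0 M1 V (lab (n @ [i])) I' \<and>
     (\<forall>z\<in>seq_labels (lab n). I' z = I z) \<and> seq_labels (lab n) \<subseteq> seq_labels (lab (n @ [i]))"
proof -
  obtain k where hk: "\<forall>i. n @ [i] \<in> P \<longleftrightarrow> i < k"
    and r: "rule (map (\<lambda>i. lab (n @ [i])) [0..<k]) (lab n)"
    using assms(1,2) unfolding pre_proof_def by blast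
  obtain p I' where p: "p \<in> set (map (\<lambda>i. lab (n @ [i])) [0..<k])"
    and f: "fals prec M0 M1 V p I'" and ag: "\<forall>z\<in>seq_labels (lab n). I' z = I z"
    using rule_sound[OF r assms(3,4)] by blast
  obtain i where i: "i < k" "p = lab (n @ [i])" using p by auto
  have "seq_labels (lab n) \<subseteq> seq_labels p" using rule_labels[OF r p] .
  then show ?thesis using i hk f ag by blast
qed

lemma chain_false:
  fixes x :: "nat \<Rightarrow> 'l" and w :: "nat \<Rightarrow> 'w"
  assumes tr: "\<forall>x y z. prec x y \<longrightarrow> prec y z \<longrightarrow> prec x z"
    and nochain: "\<not> (\<exists>f :: nat \<Rightarrow> 'w. \<forall>i. prec (f i) (f (Suc i)))"
    and st: "\<forall>m\<ge>i0. (x (Suc m) = x m \<and> w (Suc m) = w m) \<or> prec (w m) (w (Suc m))"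
    and nc: "\<not> (\<exists>n. \<forall>m\<ge>n. x m = x n)"
  shows False
proof -
  have A: "(x (i + k) = x i \<and> w (i + k) = w i) \<or> prec (w i) (w (i + k))" if "i \<ge> i0" for i k
  proof (induction k)
    case 0 then show ?case by simp
  next
    case (Suc k)
    have s: "(x (Suc (i + k)) = x (i + k) \<and> w (Suc (i + k)) = w (i + k)) \<or> prec (w (i + k)) (w (Suc (i + k)))"
      using st that by simp
    show ?case using Suc s tr by auto
  qed
  have B: "\<exists>m>i. prec (w i) (w m)" if "i \<ge> i0" for i
  proof -
    obtain m where m: "m \<ge> i" "x m \<noteq> x i" using nc by blast
    obtain k where "m = i + k" using m(1) le_Suc_ex by blast
    then show ?thesis using A[OF that, of k] m by (metis le_neq_implies_less)
  qed
  then obtain g where g: "\<forall>i\<ge>i0. g i > i \<and> prec (w i) (w (g i))" by metis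
  have ge: "(g ^^ k) i0 \<ge> i0" for k
    by (induction k) (auto, metis g less_imp_le order_trans)
  have "\<forall>k. prec (w ((g ^^ k) i0)) (w ((g ^^ Suc k) i0))"
    using g ge by simp
  then have "\<exists>f :: nat \<Rightarrow> 'w. \<forall>i. prec (f i) (f (Suc i))"
    by (intro exI[where x="\<lambda>k. w ((g ^^ k) i0)"]) simp
  then show False using nochain by blast
qed

theorem theorem2:
  fixes S :: "('l :: countable, 'p :: countable) seq"
    and prec :: "'w \<Rightarrow> 'w \<Rightarrow> bool" and M0 M1 :: "'w set" and V :: "'p \<Rightarrow> 'w set"
  assumes "provable S"
    and "carlson_model prec"
  shows "valid_in prec M0 M1 V S"
proof (rule ccontr)
  assume nv: "\<not> valid_in prec M0 M1 V S"
  have tr: "\<forall>x y z. prec x y \<longrightarrow> prec y z \<longrightarrow> prec x z"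
    and nochain: "\<not> (\<exists>f :: nat \<Rightarrow> 'w. \<forall>i. prec (f i) (f (Suc i)))"
    using assms(2) unfolding carlson_model_def by auto
  obtain P lab where pf: "is_proof P lab" and root: "lab [] = S"
    using assms(1) unfolding provable_def by blast
  have pp: "pre_proof P lab" using pf unfolding is_proof_def by blast
  obtain I0 where I0: "fals prec M0 M1 V S I0" using nv valid_fals by blast
  define inv where "inv = (\<lambda>st :: nat list \<times> ('l \<Rightarrow> 'w). fst st \<in> P \<and> fals prec M0 M1 V (lab (fst st)) (snd st))"
  define Q where "Q = (\<lambda>(st :: nat list \<times> ('l \<Rightarrow> 'w)) st'. (\<exists>i. fst st' = fst st @ [i]) \<and> inv st' \<and>
      (\<forall>z\<in>seq_labels (lab (fst st)). snd st' z = snd st z) \<and>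
      seq_labels (lab (fst st)) \<subseteq> seq_labels (lab (fst st')))"
  define nxt where "nxt = (\<lambda>st. SOME st'. Q st st')"
  have nxtQ: "Q st (nxt st)" if hinv: "inv st" for st
  proof -
    have h1: "fst st \<in> P" and h2: "fals prec M0 M1 V (lab (fst st)) (snd st)"
      using hinv unfolding inv_def by auto
    obtain i I' where h: "fst st @ [i] \<in> P" "fals prec M0 M1 V (lab (fst st @ [i])) I'"
      "\<forall>z\<in>seq_labels (lab (fst st)). I' z = snd st z"
      "seq_labels (lab (fst st)) \<subseteq> seq_labels (lab (fst st @ [i]))"
      using step_exists[OF pp h1 tr h2] by blast
    have "Q st (fst st @ [i], I')" unfolding Q_def inv_def using h by auto
    then show ?thesis unfolding nxt_def by (rule someI)
  qed
  define st where "st = (\<lambda>k. (nxt ^^ k) ([], I0))"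
  have stinv: "inv (st k)" for k
  proof (induction k)
    case 0 then show ?case using I0 root pp unfolding st_def inv_def pre_proof_def by simp
  next
    case (Suc k)
    then show ?case using nxtQ[OF Suc] unfolding st_def Q_def by simp
  qed
  have stQ: "Q (st k) (st (Suc k))" for k
    using nxtQ[OF stinv[of k]] unfolding st_def by simp
  define b where "b = (\<lambda>k. fst (st k))"
  define Is where "Is = (\<lambda>k. snd (st k))"
  define L where "L = (\<lambda>k. seq_labels (lab (b k)))"
  have b0: "b 0 = []" unfolding b_def st_def by simp
  have bi: "b i \<in> P \<and> (\<exists>c. b (Suc i) = b i @ [c])" for i
    using stinv[of i] stQ[of i] unfolding b_def inv_def Q_def by auto
  have br: "inf_branch P b"
    unfolding inf_branch_def using b0 bi by blast
  obtain x where x: "progressing_trace (\<lambda>i. lab (b i)) x"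
    using pf br unfolding is_proof_def by blast
  have trc: "\<forall>i. x (Suc i) = x i \<or> RAt RR (x i) (x (Suc i)) \<in># rels (lab (b i))
                          \<or> RAt SS (x i) (x (Suc i)) \<in># rels (lab (b i))"
    and nc: "\<not> (\<exists>n. \<forall>m\<ge>n. x m = x n)"
    using x unfolding progressing_trace_def is_trace_def by auto
  have fl: "fals prec M0 M1 V (lab (b k)) (Is k)" for k
    using stinv[of k] unfolding inv_def b_def Is_def by simp
  have ag: "\<forall>z\<in>L k. Is (Suc k) z = Is k z" for k
    using stQ[of k] unfolding Q_def L_def b_def Is_def by simp
  have Lmono: "L k \<subseteq> L (Suc k)" for k
    using stQ[of k] unfolding Q_def L_def b_def by simp
  have H: "x (Suc m) = x m \<or> x (Suc m) \<in> L m" for m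
    using trc[rule_format, of m] rels_labels[of _ "x m" "x (Suc m)" "lab (b m)"] unfolding L_def by blast
  obtain j where j: "x (Suc j) \<noteq> x j"
  proof -
    have "\<exists>j. x (Suc j) \<noteq> x j"
    proof (rule ccontr)
      assume "\<not> (\<exists>j. x (Suc j) \<noteq> x j)"
      then have hh: "x (Suc k) = x k" for k by blast
      have "x m = x 0" for m by (induction m) (simp_all add: hh)
      then show False using nc by blast
    qed
    then show ?thesis using that by blast
  qed
  have inL: "x m \<in> L m" if "m \<ge> Suc j" for m
    using that
  proof (induction m rule: dec_induct)
    case base
    have "x (Suc j) \<in> L j" using H[of j] j by simp
    then show ?case using Lmono[of j] by blast
  next
    case (step m)
    then have "x (Suc m) \<in> L m" using H[of m] by auto
    then show ?case using Lmono[of m] by blast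
  qed
  define w where "w = (\<lambda>m. Is m (x m))"
  have stp: "\<forall>m\<ge>Suc j. (x (Suc m) = x m \<and> w (Suc m) = w m) \<or> prec (w m) (w (Suc m))"
  proof (intro allI impI)
    fix m assume m: "m \<ge> Suc j"
    have xm: "x m \<in> L m" using inL[OF m] .
    have xs: "x (Suc m) \<in> L m" using H[of m] xm by auto
    have e: "w (Suc m) = Is m (x (Suc m))" unfolding w_def using ag[of m] xs by simp
    show "(x (Suc m) = x m \<and> w (Suc m) = w m) \<or> prec (w m) (w (Suc m))"
    proof (cases "x (Suc m) = x m")
      case True then show ?thesis using e unfolding w_def by simp
    next
      case False
      then have "RAt RR (x m) (x (Suc m)) \<in># rels (lab (b m)) \<or> RAt SS (x m) (x (Suc m)) \<in># rels (lab (b m))"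
        using trc by blast
      moreover have "is_interp prec M0 M1 (lab (b m)) (Is m)" using fl fals_interp by blast
      ultimately have "prec (Is m (x m)) (Is m (x (Suc m)))" unfolding is_interp_def by blast
      then show ?thesis using e unfolding w_def by simp
    qed
  qed
  show False using chain_false[OF tr nochain stp nc] .
qed

end
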